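(* Let $N, N_y, M \in \mathbb{N}$, $X \in \mathbb{R}^{N \times M}$, $Y \in \mathbb{R}^{N_y \times M}$, $\lambda \ge 0$, and $\Omega = \{1,\dots,N\}$. For $S\subset\Omega$ with $X_SX_S^\top + \lambda I_{|S|} \succ 0$ let $J(S) = \operatorname{tr}\{ Y X_S^\top (X_S X_S^\top + \lambda I_{|S|})^{-1} X_S Y^\top \}$, with $J(\emptyset)=0$. Then for any $S \subset \Omega$ and $i \in \Omega\setminus S$ such that $P^{xx}_{S\cup\{i\},S\cup\{i\}} \succ 0$, \[ J(S\cup\{i\}) - J(S) = \frac{\| (Q^{xy}_i(S))^\top \|^2}{Q^{xx}_{i,i}(S)}. \]
   Context: Notation: for a matrix $A$ and an ordered index set $S=\{S_1,\dots,S_k\}$, $A_S$ is the matrix whose $j$th row is row $S_j$ of $A$; $A_{S,S}$ is the $k\times k$ matrix with $(j,l)$ entry $A_{S_j,S_l}$; $A_i$ is row $i$ of $A$, $A_{i,i}$ its $(i,i)$ entry; $\|\cdot\|$ is the Euclidean norm. Define $P^{xx} = XX^\top + \lambda I_N$ (so $P^{xx}_{S,S} = X_SX_S^\top+\lambda I_{|S|}$), $P^{xy} = XY^\top$. Define $Q^{xx}(\emptyset)=P^{xx}$, $Q^{xy}(\emptyset)=P^{xy}$, and for $|S|\ge1$ with $P^{xx}_{S,S}\succ0$: $Q^{xx}(S) = P^{xx} - (P^{xx}_S)^\top (P^{xx}_{S,S})^{-1} P^{xx}_S$, $Q^{xy}(S) = P^{xy} - (P^{xx}_S)^\top (P^{xx}_{S,S})^{-1}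 P^{xy}_S$. *)

theory Defs
  imports "Jordan_Normal_Form.DL_Submatrix"
begin

definition vnorm :: "real vec \<Rightarrow> real" where
  "vnorm v = sqrt (v \<bullet> v)"

definition mtrace :: "real mat \<Rightarrow> real" where
  "mtrace A = (\<Sum>k<dim_row A. A $$ (k,k))"

(* inverse of a square matrix (meaningful when it is invertible) *)
definition minv :: "real mat \<Rightarrow> real mat" where
  "minv A = (SOME B. B \<in> carrier_mat (dim_row A) (dim_row A) \<and> inverts_mat A B \<and> inverts_mat B A)"

definition pos_def :: "real mat \<Rightarrow> bool" where
  "pos_def A \<longleftrightarrow> square_mat A \<and> A\<^sup>T = A \<and>
     (\<forall>x \<in> carrier_vec (dim_row A). x \<noteq> 0\<^sub>v (dim_row A) \<longrightarrow> x \<bullet> (A *\<^sub>v x) > 0)"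

(* A_S : rows of A indexed by S, in increasing order *)
definition rows_sel :: "real mat \<Rightarrow> nat set \<Rightarrow> real mat" where
  "rows_sel A S = submatrix A S {0..<dim_col A}"

definition sub_sq :: "real mat \<Rightarrow> nat set \<Rightarrow> real mat" where
  "sub_sq A S = submatrix A S S"

definition Pxx :: "real mat \<Rightarrow> real \<Rightarrow> real mat" where
  "Pxx X lam = X * X\<^sup>T + lam \<cdot>\<^sub>m 1\<^sub>m (dim_row X)"

definition Pxy :: "real mat \<Rightarrow> real mat \<Rightarrow> real mat" where
  "Pxy X Y = X * Y\<^sup>T"

definition Qxx :: "real mat \<Rightarrow> real \<Rightarrow> nat set \<Rightarrow> real mat" where
  "Qxx X lam S = (if S = {} then Pxx X lam
     else Pxx X lam - (rows_sel (Pxx X lam) S)\<^sup>T * minv (sub_sq (Pxx X lam) S) * rows_sel (Pxx X lam) S)"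

definition Qxy :: "real mat \<Rightarrow> real mat \<Rightarrow> real \<Rightarrow> nat set \<Rightarrow> real mat" where
  "Qxy X Y lam S = (if S = {} then Pxy X Y
     else Pxy X Y - (rows_sel (Pxx X lam) S)\<^sup>T * minv (sub_sq (Pxx X lam) S) * rows_sel (Pxy X Y) S)"

definition Jfun :: "real mat \<Rightarrow> real mat \<Rightarrow> real \<Rightarrow> nat set \<Rightarrow> real" where
  "Jfun X Y lam S = (if S = {} then 0
     else mtrace (Y * (rows_sel X S)\<^sup>T
                  * minv (rows_sel X S * (rows_sel X S)\<^sup>T + lam \<cdot>\<^sub>m 1\<^sub>m (card S))
                  * rows_sel X S * Y\<^sup>T))"

end

theory Submission imports Defs "Jordan_Normal_Form.Determinant" begin

definition idx :: "nat set \<Rightarrow> nat \<Rightarrow> nat" where "idx S r = card {a\<in>S. a < r}"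

lemma idx_lt: "finite S \<Longrightarrow> r \<in> S \<Longrightarrow> idx S r < card S"
  unfolding idx_def by (rule psubset_card_mono) auto

lemma pick_idx: "r \<in> S \<Longrightarrow> pick S (idx S r) = r"
  unfolding idx_def by (rule pick_card_in_set)

lemma idx_pick: "a < card S \<Longrightarrow> idx S (pick S a) = a"
  unfolding idx_def by (rule card_pick_le)

lemma pick_in: "a < card S \<Longrightarrow> pick S a \<in> S"
  by (rule pick_in_set_le)

lemma pick_iff: "finite S \<Longrightarrow> a < card S \<Longrightarrow> (r = pick S a) \<longleftrightarrow> (r \<in> S \<and> a = idx S r)"
  using pick_in idx_pick pick_idx by metis

lemma sum_pick: assumes "finite S" "S \<subseteq> {0..<N}"
  shows "(\<Sum>r<N. if r \<in> S then h (idx S r) else 0) = (\<Sum>a<card S. (h a :: real))"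
proof -
  have "(\<Sum>a<card S. h a) = (\<Sum>a<card S. \<Sum>r<N. if r = pick S a then h a else 0)"
  proof (rule sum.cong[OF refl])
    fix a assume "a \<in> {..<card S}"
    then have "pick S a < N" using pick_in assms by fastforce
    then show "h a = (\<Sum>r<N. if r = pick S a then h a else 0)" by (simp add: sum.delta')
  qed
  also have "\<dots> = (\<Sum>r<N. \<Sum>a<card S. if r = pick S a then h a else 0)" by (rule sum.swap)
  also have "\<dots> = (\<Sum>r<N. if r \<in> S then h (idx S r) else 0)"
  proof (rule sum.cong[OF refl])
    fix r assume r: "r \<in> {..<N}"
    have "(\<Sum>a<card S. if r = pick S a then h a else 0) = (\<Sum>a<card S. if a = idx S r \<and> r \<in> S then h a else 0)"
      by (rule sum.cong[OF refl]) (use pick_iff[OF assms(1)] in auto)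
    also have "\<dots> = (if r \<in> S then h (idx S r) else 0)"
      using idx_lt[OF assms(1)] by (cases "r \<in> S") (auto simp: sum.delta')
    finally show "(\<Sum>a<card S. if r = pick S a then h a else 0) = (if r \<in> S then h (idx S r) else 0)" .
  qed
  finally show ?thesis by simp
qed

lemma card_sub: "S \<subseteq> {0..<N} \<Longrightarrow> card {i. i < N \<and> i \<in> S} = card S"
  by (metis (no_types, lifting) Collect_cong Collect_mem_eq atLeastLessThan_iff subset_iff)

lemma pick_range: "c < N \<Longrightarrow> pick {0..<N} c = c"
proof -
  assume c: "c < N"
  have e: "{a. a < N \<and> a \<in> UNIV} = {0..<N}" by auto
  have "pick UNIV c = pick {a. a < N \<and> a \<in> UNIV} c" by (rule pick_reduce_set) (use c e in auto)
  then show ?thesis using e pick_UNIV by simp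
qed

lemma rows_sel_dims: assumes "A \<in> carrier_mat N n" "S \<subseteq> {0..<N}"
  shows "rows_sel A S \<in> carrier_mat (card S) n"
  using assms card_sub[OF assms(2)] unfolding rows_sel_def carrier_mat_def
  by (auto simp: dim_submatrix)

lemma rows_sel_idx: assumes "A \<in> carrier_mat N n" "S \<subseteq> {0..<N}" "a < card S" "c < n"
  shows "rows_sel A S $$ (a,c) = A $$ (pick S a, c)"
proof -
  have dc: "dim_col A = n" "dim_row A = N" using assms(1) by auto
  have "rows_sel A S $$ (a,c) = A $$ (pick S a, pick {0..<n} c)"
    unfolding rows_sel_def dc(1) using assms card_sub[OF assms(2)] card_sub[of "{0..<n}" n]
    by (intro submatrix_index) (auto simp: dc)
  then show ?thesis using pick_range assms by simp
qed

lemma sub_sq_dims: assumes "A \<in> carrier_mat N N" "S \<subseteq> {0..<N}"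
  shows "sub_sq A S \<in> carrier_mat (card S) (card S)"
  using assms card_sub[OF assms(2)] unfolding sub_sq_def carrier_mat_def
  by (auto simp: dim_submatrix)

lemma sub_sq_idx: assumes "A \<in> carrier_mat N N" "S \<subseteq> {0..<N}" "a < card S" "b < card S"
  shows "sub_sq A S $$ (a,b) = A $$ (pick S a, pick S b)"
  unfolding sub_sq_def using assms card_sub[OF assms(2)]
  by (intro submatrix_index) auto


lemma sum_supp: assumes "finite S" "S \<subseteq> {0..<N}" "\<And>r. r < N \<Longrightarrow> r \<notin> S \<Longrightarrow> f r = 0"
  shows "(\<Sum>r<N. f r) = (\<Sum>a<card S. (f (pick S a) :: real))"
proof -
  have "(\<Sum>r<N. f r) = (\<Sum>r<N. if r \<in> S then f (pick S (idx S r)) else 0)"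
    by (rule sum.cong[OF refl]) (use assms(3) pick_idx in auto)
  also have "\<dots> = (\<Sum>a<card S. f (pick S a))" by (rule sum_pick[OF assms(1,2)])
  finally show ?thesis .
qed

lemma quad_expand: assumes "P \<in> carrier_mat N N" "v \<in> carrier_vec N"
  shows "v \<bullet> (P *\<^sub>v v) = (\<Sum>r<N. v $ r * (\<Sum>c<N. P $$ (r,c) * v $ c))"
  using assms by (auto simp: scalar_prod_def lessThan_atLeast0 mult_mat_vec_def row_def intro!: sum.cong)

lemma quad_embed: assumes P: "P \<in> carrier_mat N N" and S: "S \<subseteq> {0..<N}"
  and v: "v \<in> carrier_vec N" and supp: "\<And>r. r < N \<Longrightarrow> r \<notin> S \<Longrightarrow> v $ r = 0"
  shows "v \<bullet> (P *\<^sub>v v) = vec (card S) (\<lambda>a. v $ pick S a) \<bullet> (sub_sq P S *\<^sub>v vec (card S) (\<lambda>a. v $ pick S a))"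
proof -
  have fin: "finite S" using S finite_subset by blast
  have A: "sub_sq P S \<in> carrier_mat (card S) (card S)" by (rule sub_sq_dims[OF P S])
  have pN: "a < card S \<Longrightarrow> pick S a < N" for a using pick_in S by fastforce
  have "v \<bullet> (P *\<^sub>v v) = (\<Sum>r<N. v $ r * (\<Sum>c<N. P $$ (r,c) * v $ c))" by (rule quad_expand[OF P v])
  also have "\<dots> = (\<Sum>a<card S. v $ pick S a * (\<Sum>c<N. P $$ (pick S a,c) * v $ c))"
    by (rule sum_supp[OF fin S]) (use supp in auto)
  also have "\<dots> = (\<Sum>a<card S. v $ pick S a * (\<Sum>b<card S. P $$ (pick S a,pick S b) * v $ pick S b))"
    by (rule sum.cong[OF refl], subst sum_supp[OF fin S]) (use supp in auto)
  also have "\<dots> = (\<Sum>a<card S. v $ pick S a * (\<Sum>b<card S. sub_sq P S $$ (a,b) * v $ pick S b))"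
    by (intro sum.cong refl arg_cong2[where f="(*)"]) (auto simp: sub_sq_idx[OF P S])
  also have "\<dots> = vec (card S) (\<lambda>a. v $ pick S a) \<bullet> (sub_sq P S *\<^sub>v vec (card S) (\<lambda>a. v $ pick S a))"
    by (subst quad_expand[OF A]) auto
  finally show ?thesis .
qed

definition PDon :: "real mat \<Rightarrow> nat \<Rightarrow> nat set \<Rightarrow> bool" where
  "PDon P N T \<longleftrightarrow> (\<forall>v\<in>carrier_vec N. (\<forall>r<N. r \<notin> T \<longrightarrow> v $ r = 0) \<longrightarrow> v \<noteq> 0\<^sub>v N \<longrightarrow> v \<bullet> (P *\<^sub>v v) > 0)"

lemma PDon_mono: "PDon P N T \<Longrightarrow> S \<subseteq> T \<Longrightarrow> PDon P N S"
  unfolding PDon_def by blast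

lemma pos_def_PDon: assumes P: "P \<in> carrier_mat N N" and S: "S \<subseteq> {0..<N}"
  and pd: "pos_def (sub_sq P S)"
  shows "PDon P N S"
  unfolding PDon_def
proof (intro ballI impI)
  fix v :: "real vec" assume v: "v \<in> carrier_vec N" and supp: "\<forall>r<N. r \<notin> S \<longrightarrow> v $ r = 0"
    and nz: "v \<noteq> 0\<^sub>v N"
  have fin: "finite S" using S finite_subset by blast
  let ?w = "vec (card S) (\<lambda>a. v $ pick S a)"
  obtain r where r: "r < N" "v $ r \<noteq> 0" using nz v by (metis eq_vecI carrier_vecD index_zero_vec(1,2))
  then have rS: "r \<in> S" using supp by blast
  have "?w $ idx S r \<noteq> 0" using r rS idx_lt[OF fin rS] pick_idx[OF rS] by simp
  moreover have "?w = 0\<^sub>v (card S) \<Longrightarrow> ?w $ idx S r = 0" using idx_lt[OF fin rS] by simp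
  ultimately have wnz: "?w \<noteq> 0\<^sub>v (card S)" by blast
  have A: "sub_sq P S \<in> carrier_mat (card S) (card S)" by (rule sub_sq_dims[OF P S])
  have "?w \<bullet> (sub_sq P S *\<^sub>v ?w) > 0" using pd wnz A unfolding pos_def_def by auto
  then show "v \<bullet> (P *\<^sub>v v) > 0" using quad_embed[OF P S v] supp by simp
qed

lemma PDon_det: assumes P: "P \<in> carrier_mat N N" and S: "S \<subseteq> {0..<N}" and pd: "PDon P N S"
  shows "det (sub_sq P S) \<noteq> 0"
proof
  assume "det (sub_sq P S) = 0"
  have fin: "finite S" using S finite_subset by blast
  have A: "sub_sq P S \<in> carrier_mat (card S) (card S)" by (rule sub_sq_dims[OF P S])
  obtain w where w: "w \<in> carrier_vec (card S)" "w \<noteq> 0\<^sub>v (card S)" "sub_sq P S *\<^sub>v w = 0\<^sub>v (card S)"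
    using det_0_iff_vec_prod_zero[OF A] \<open>det (sub_sq P S) = 0\<close> by auto
  define v where "v = vec N (\<lambda>r. if r \<in> S then w $ idx S r else 0)"
  have v: "v \<in> carrier_vec N" unfolding v_def by simp
  have supp: "\<And>r. r < N \<Longrightarrow> r \<notin> S \<Longrightarrow> v $ r = 0" unfolding v_def by simp
  have pN: "a < card S \<Longrightarrow> pick S a < N" for a using pick_in S by fastforce
  have wv: "vec (card S) (\<lambda>a. v $ pick S a) = w"
    using w(1) pN pick_in idx_pick unfolding v_def by (intro eq_vecI) auto
  obtain a where a: "a < card S" "w $ a \<noteq> 0" using w by (metis eq_vecI carrier_vecD index_zero_vec(1,2))
  have "v $ pick S a \<noteq> 0" using a pN pick_in idx_pick unfolding v_def by simp
  then have "v \<noteq> 0\<^sub>v N" using pN a by auto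
  then have "v \<bullet> (P *\<^sub>v v) > 0" using pd v supp unfolding PDon_def by blast
  moreover have "v \<bullet> (P *\<^sub>v v) = 0" using quad_embed[OF P S v supp] wv w by simp
  ultimately show False by simp
qed

lemma minv_props: assumes A: "A \<in> carrier_mat k k" and d: "det A \<noteq> 0"
  shows "minv A \<in> carrier_mat k k" "A * minv A = 1\<^sub>m k" "minv A * A = 1\<^sub>m k"
proof -
  have U: "A \<in> Units (ring_mat TYPE(real) k ())" by (rule det_non_zero_imp_unit[OF A d])
  then obtain B where B: "B \<in> carrier_mat k k" "B * A = 1\<^sub>m k" "A * B = 1\<^sub>m k"
    unfolding Units_def by (auto simp: ring_mat_simps)
  have ex: "\<exists>B. B \<in> carrier_mat (dim_row A) (dim_row A) \<and> inverts_mat A B \<and> inverts_mat B A"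
    using A B unfolding inverts_mat_def by auto
  have "minv A \<in> carrier_mat (dim_row A) (dim_row A) \<and> inverts_mat A (minv A) \<and> inverts_mat (minv A) A"
    unfolding minv_def by (rule someI_ex[OF ex])
  then show "minv A \<in> carrier_mat k k" "A * minv A = 1\<^sub>m k" "minv A * A = 1\<^sub>m k"
    using A unfolding inverts_mat_def by auto
qed


definition Gm :: "real mat \<Rightarrow> nat set \<Rightarrow> nat \<Rightarrow> nat \<Rightarrow> real" where
  "Gm Ai S r c = (if r \<in> S \<and> c \<in> S then Ai $$ (idx S r, idx S c) else 0)"

lemma conv: assumes fin: "finite S" and S: "S \<subseteq> {0..<N}"
  shows "(\<Sum>a<card S. \<Sum>b<card S. f (pick S a) * Ai $$ (a,b) * g (pick S b))
       = (\<Sum>r<N. \<Sum>c<N. f r * Gm Ai S r c * g c)"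
proof -
  have "(\<Sum>r<N. \<Sum>c<N. f r * Gm Ai S r c * g c) = (\<Sum>a<card S. \<Sum>c<N. f (pick S a) * Gm Ai S (pick S a) c * g c)"
    by (rule sum_supp[OF fin S]) (auto simp: Gm_def)
  also have "\<dots> = (\<Sum>a<card S. \<Sum>b<card S. f (pick S a) * Gm Ai S (pick S a) (pick S b) * g (pick S b))"
    by (rule sum.cong[OF refl], rule sum_supp[OF fin S]) (auto simp: Gm_def)
  also have "\<dots> = (\<Sum>a<card S. \<Sum>b<card S. f (pick S a) * Ai $$ (a,b) * g (pick S b))"
    by (intro sum.cong refl) (auto simp: Gm_def pick_in idx_pick)
  finally show ?thesis by simp
qed

lemma trip: assumes U: "U \<in> carrier_mat k n1" and M: "M \<in> carrier_mat k k" and V: "V \<in> carrier_mat k n2"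
  and r: "r < n1" and c: "c < n2"
  shows "(U\<^sup>T * M * V) $$ (r,c) = (\<Sum>a<k. \<Sum>b<k. U $$ (a,r) * M $$ (a,b) * (V $$ (b,c) :: real))"
proof -
  have "(U\<^sup>T * M * V) $$ (r,c) = (\<Sum>a<k. U $$ (a,r) * (\<Sum>b<k. M $$ (a,b) * V $$ (b,c)))"
    using U M V r c by (auto simp: scalar_prod_def lessThan_atLeast0 row_def col_def intro!: sum.cong)
  also have "\<dots> = (\<Sum>a<k. \<Sum>b<k. U $$ (a,r) * M $$ (a,b) * V $$ (b,c))"
    by (simp add: sum_distrib_left mult.assoc)
  finally show ?thesis .
qed

lemma idx_inj: "r \<in> S \<Longrightarrow> c \<in> S \<Longrightarrow> (idx S r = idx S c) = (r = c)"
  by (metis pick_idx)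

lemma G2: assumes P: "P \<in> carrier_mat N N" and S: "S \<subseteq> {0..<N}"
  and Ai: "Ai \<in> carrier_mat (card S) (card S)" and inv: "sub_sq P S * Ai = 1\<^sub>m (card S)"
  and r: "r \<in> S" and c: "c \<in> S"
  shows "(\<Sum>k<N. P $$ (r,k) * Gm Ai S k c) = (if r = c then 1 else 0)"
proof -
  have fin: "finite S" using S finite_subset by blast
  have A: "sub_sq P S \<in> carrier_mat (card S) (card S)" by (rule sub_sq_dims[OF P S])
  have "(\<Sum>k<N. P $$ (r,k) * Gm Ai S k c) = (\<Sum>b<card S. P $$ (r,pick S b) * Gm Ai S (pick S b) c)"
    by (rule sum_supp[OF fin S]) (auto simp: Gm_def)
  also have "\<dots> = (\<Sum>b<card S. sub_sq P S $$ (idx S r, b) * Ai $$ (b, idx S c))"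
    by (intro sum.cong refl) (auto simp: Gm_def pick_in idx_pick sub_sq_idx[OF P S] idx_lt[OF fin] r c pick_idx)
  also have "\<dots> = (sub_sq P S * Ai) $$ (idx S r, idx S c)"
    using A Ai idx_lt[OF fin r] idx_lt[OF fin c] by (auto simp: scalar_prod_def lessThan_atLeast0 row_def col_def intro!: sum.cong)
  also have "\<dots> = (if r = c then 1 else 0)"
    using inv idx_lt[OF fin r] idx_lt[OF fin c] idx_inj[OF r c] by simp
  finally show ?thesis .
qed

lemma G3: assumes P: "P \<in> carrier_mat N N" and S: "S \<subseteq> {0..<N}"
  and Ai: "Ai \<in> carrier_mat (card S) (card S)" and inv: "Ai * sub_sq P S = 1\<^sub>m (card S)"
  and r: "r \<in> S" and c: "c \<in> S"
  shows "(\<Sum>k<N. Gm Ai S r k * P $$ (k,c)) = (if r = c then 1 else 0)"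
proof -
  have fin: "finite S" using S finite_subset by blast
  have A: "sub_sq P S \<in> carrier_mat (card S) (card S)" by (rule sub_sq_dims[OF P S])
  have "(\<Sum>k<N. Gm Ai S r k * P $$ (k,c)) = (\<Sum>b<card S. Gm Ai S r (pick S b) * P $$ (pick S b, c))"
    by (rule sum_supp[OF fin S]) (auto simp: Gm_def)
  also have "\<dots> = (\<Sum>b<card S. Ai $$ (idx S r, b) * sub_sq P S $$ (b, idx S c))"
    by (intro sum.cong refl) (auto simp: Gm_def pick_in idx_pick sub_sq_idx[OF P S] idx_lt[OF fin] r c pick_idx)
  also have "\<dots> = (Ai * sub_sq P S) $$ (idx S r, idx S c)"
    using A Ai idx_lt[OF fin r] idx_lt[OF fin c] by (auto simp: scalar_prod_def lessThan_atLeast0 row_def col_def intro!: sum.cong)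
  also have "\<dots> = (if r = c then 1 else 0)"
    using inv idx_lt[OF fin r] idx_lt[OF fin c] idx_inj[OF r c] by simp
  finally show ?thesis .
qed

lemma uniq: assumes P: "P \<in> carrier_mat N N" and pd: "PDon P N T"
  and G0: "\<And>r c. r < N \<Longrightarrow> c < N \<Longrightarrow> \<not> (r \<in> T \<and> c \<in> T) \<Longrightarrow> G r c = 0"
  and H0: "\<And>r c. r < N \<Longrightarrow> c < N \<Longrightarrow> \<not> (r \<in> T \<and> c \<in> T) \<Longrightarrow> H r c = 0"
  and G2: "\<And>r c. r \<in> T \<Longrightarrow> c \<in> T \<Longrightarrow> (\<Sum>k<N. P $$ (r,k) * G k c) = (if r = c then 1 else (0::real))"
  and H2: "\<And>r c. r \<in> T \<Longrightarrow> c \<in> T \<Longrightarrow> (\<Sum>k<N. P $$ (r,k) * H k c) = (if r = c then 1 else (0::real))"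
  and r: "r < N" and c: "c < N"
  shows "G r c = H r c"
proof (cases "c \<in> T")
  case False then show ?thesis using G0 H0 r c by auto
next
  case cT: True
  define v where "v = vec N (\<lambda>k. G k c - H k c)"
  have v: "v \<in> carrier_vec N" unfolding v_def by simp
  have supp: "\<forall>k<N. k \<notin> T \<longrightarrow> v $ k = 0" unfolding v_def using G0 H0 c by auto
  have "v \<bullet> (P *\<^sub>v v) = (\<Sum>k<N. v $ k * (\<Sum>l<N. P $$ (k,l) * v $ l))" by (rule quad_expand[OF P v])
  also have "\<dots> = 0"
  proof (rule sum.neutral, intro ballI)
    fix k assume k: "k \<in> {..<N}"
    show "v $ k * (\<Sum>l<N. P $$ (k,l) * v $ l) = 0"
    proof (cases "k \<in> T")
      case True
      have "(\<Sum>l<N. P $$ (k,l) * v $ l) = (\<Sum>l<N. P $$ (k,l) * G l c) - (\<Sum>l<N. P $$ (k,l) * H l c)"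
        unfolding v_def by (simp add: algebra_simps sum_subtractf)
      also have "\<dots> = 0" using G2[OF True cT] H2[OF True cT] by simp
      finally show ?thesis by simp
    next
      case False then show ?thesis using supp k by simp
    qed
  qed
  finally have "v = 0\<^sub>v N" using pd v supp unfolding PDon_def by force
  then have "v $ r = 0" using r by simp
  then show ?thesis unfolding v_def using r by simp
qed


lemma Pxx_carrier: "X \<in> carrier_mat N M \<Longrightarrow> Pxx X lam \<in> carrier_mat N N"
  unfolding Pxx_def by auto

lemma Pxy_carrier: "X \<in> carrier_mat N M \<Longrightarrow> Y \<in> carrier_mat Ny M \<Longrightarrow> Pxy X Y \<in> carrier_mat N Ny"
  unfolding Pxy_def by auto

lemma Pxx_sym: assumes "X \<in> carrier_mat N M" "r < N" "c < N"
  shows "Pxx X lam $$ (r,c) = Pxx X lam $$ (c,r)"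
  using assms unfolding Pxx_def by (auto simp: scalar_prod_def row_def col_def mult.commute)

lemma Qxx_entry: assumes X: "X \<in> carrier_mat N M" and S: "S \<subseteq> {0..<N}"
  and pd: "PDon (Pxx X lam) N S" and i: "i < N"
  shows "Qxx X lam S $$ (i,i) = Pxx X lam $$ (i,i)
     - (\<Sum>r<N. \<Sum>c<N. Pxx X lam $$ (r,i) * Gm (minv (sub_sq (Pxx X lam) S)) S r c * Pxx X lam $$ (c,i))"
proof (cases "S = {}")
  case True then show ?thesis unfolding Qxx_def by (simp add: Gm_def)
next
  case False
  let ?P = "Pxx X lam"
  have P: "?P \<in> carrier_mat N N" by (rule Pxx_carrier[OF X])
  have fin: "finite S" using S finite_subset by blast
  have A: "sub_sq ?P S \<in> carrier_mat (card S) (card S)" by (rule sub_sq_dims[OF P S])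
  have Ai: "minv (sub_sq ?P S) \<in> carrier_mat (card S) (card S)"
    by (rule minv_props(1)[OF A PDon_det[OF P S pd]])
  have R: "rows_sel ?P S \<in> carrier_mat (card S) N" by (rule rows_sel_dims[OF P S])
  have "Qxx X lam S $$ (i,i) = ?P $$ (i,i) - ((rows_sel ?P S)\<^sup>T * minv (sub_sq ?P S) * rows_sel ?P S) $$ (i,i)"
    unfolding Qxx_def using False i P R Ai by simp
  also have "((rows_sel ?P S)\<^sup>T * minv (sub_sq ?P S) * rows_sel ?P S) $$ (i,i)
     = (\<Sum>a<card S. \<Sum>b<card S. rows_sel ?P S $$ (a,i) * minv (sub_sq ?P S) $$ (a,b) * rows_sel ?P S $$ (b,i))"
    by (rule trip[OF R Ai R i i])
  also have "\<dots> = (\<Sum>a<card S. \<Sum>b<card S. ?P $$ (pick S a,i) * minv (sub_sq ?P S) $$ (a,b) * ?P $$ (pick S b,i))"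
    by (intro sum.cong refl) (simp add: rows_sel_idx[OF P S] i)
  also have "\<dots> = (\<Sum>r<N. \<Sum>c<N. ?P $$ (r,i) * Gm (minv (sub_sq ?P S)) S r c * ?P $$ (c,i))"
    by (rule conv[OF fin S])
  finally show ?thesis .
qed

lemma Qxy_entry: assumes X: "X \<in> carrier_mat N M" and Y: "Y \<in> carrier_mat Ny M" and S: "S \<subseteq> {0..<N}"
  and pd: "PDon (Pxx X lam) N S" and i: "i < N" and j: "j < Ny"
  shows "Qxy X Y lam S $$ (i,j) = Pxy X Y $$ (i,j)
     - (\<Sum>r<N. \<Sum>c<N. Pxx X lam $$ (r,i) * Gm (minv (sub_sq (Pxx X lam) S)) S r c * Pxy X Y $$ (c,j))"
proof (cases "S = {}")
  case True then show ?thesis unfolding Qxy_def by (simp add: Gm_def)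
next
  case False
  let ?P = "Pxx X lam"
  let ?B = "Pxy X Y"
  have P: "?P \<in> carrier_mat N N" by (rule Pxx_carrier[OF X])
  have B: "?B \<in> carrier_mat N Ny" by (rule Pxy_carrier[OF X Y])
  have fin: "finite S" using S finite_subset by blast
  have A: "sub_sq ?P S \<in> carrier_mat (card S) (card S)" by (rule sub_sq_dims[OF P S])
  have Ai: "minv (sub_sq ?P S) \<in> carrier_mat (card S) (card S)"
    by (rule minv_props(1)[OF A PDon_det[OF P S pd]])
  have R: "rows_sel ?P S \<in> carrier_mat (card S) N" by (rule rows_sel_dims[OF P S])
  have RB: "rows_sel ?B S \<in> carrier_mat (card S) Ny" by (rule rows_sel_dims[OF B S])
  have "Qxy X Y lam S $$ (i,j) = ?B $$ (i,j) - ((rows_sel ?P S)\<^sup>T * minv (sub_sq ?P S) * rows_sel ?B S) $$ (i,j)"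
    unfolding Qxy_def using False i j B R Ai RB by simp
  also have "((rows_sel ?P S)\<^sup>T * minv (sub_sq ?P S) * rows_sel ?B S) $$ (i,j)
     = (\<Sum>a<card S. \<Sum>b<card S. rows_sel ?P S $$ (a,i) * minv (sub_sq ?P S) $$ (a,b) * rows_sel ?B S $$ (b,j))"
    by (rule trip[OF R Ai RB i j])
  also have "\<dots> = (\<Sum>a<card S. \<Sum>b<card S. ?P $$ (pick S a,i) * minv (sub_sq ?P S) $$ (a,b) * ?B $$ (pick S b,j))"
    by (intro sum.cong refl) (simp add: rows_sel_idx[OF P S] rows_sel_idx[OF B S] i j)
  also have "\<dots> = (\<Sum>r<N. \<Sum>c<N. ?P $$ (r,i) * Gm (minv (sub_sq ?P S)) S r c * ?B $$ (c,j))"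
    by (rule conv[OF fin S])
  finally show ?thesis .
qed

lemma J_entry: assumes X: "X \<in> carrier_mat N M" and Y: "Y \<in> carrier_mat Ny M" and S: "S \<subseteq> {0..<N}"
  and pd: "PDon (Pxx X lam) N S"
  shows "Jfun X Y lam S = (\<Sum>j<Ny. \<Sum>r<N. \<Sum>c<N.
      Pxy X Y $$ (r,j) * Gm (minv (sub_sq (Pxx X lam) S)) S r c * Pxy X Y $$ (c,j))"
proof (cases "S = {}")
  case True then show ?thesis unfolding Jfun_def by (simp add: Gm_def)
next
  case False
  let ?P = "Pxx X lam"
  let ?B = "Pxy X Y"
  let ?Xs = "rows_sel X S"
  let ?Ai = "minv (sub_sq ?P S)"
  let ?C = "?Xs * Y\<^sup>T"
  have P: "?P \<in> carrier_mat N N" by (rule Pxx_carrier[OF X])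
  have B: "?B \<in> carrier_mat N Ny" by (rule Pxy_carrier[OF X Y])
  have fin: "finite S" using S finite_subset by blast
  have A: "sub_sq ?P S \<in> carrier_mat (card S) (card S)" by (rule sub_sq_dims[OF P S])
  have Ai: "?Ai \<in> carrier_mat (card S) (card S)"
    by (rule minv_props(1)[OF A PDon_det[OF P S pd]])
  have Xs: "?Xs \<in> carrier_mat (card S) M" by (rule rows_sel_dims[OF X S])
  have C: "?C \<in> carrier_mat (card S) Ny" using Xs Y by auto
  have pN: "a < card S \<Longrightarrow> pick S a < N" for a using pick_in S by fastforce
  have eqA: "?Xs * ?Xs\<^sup>T + lam \<cdot>\<^sub>m 1\<^sub>m (card S) = sub_sq ?P S"
  proof (rule eq_matI)
    fix a b assume a: "a < dim_row (sub_sq ?P S)" and b: "b < dim_col (sub_sq ?P S)"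
    then have a': "a < card S" and b': "b < card S" using A by auto
    have "(?Xs * ?Xs\<^sup>T + lam \<cdot>\<^sub>m 1\<^sub>m (card S)) $$ (a,b) = row ?Xs a \<bullet> row ?Xs b + (if a = b then lam else 0)"
      using a' b' Xs by simp
    also have "row ?Xs a \<bullet> row ?Xs b = row X (pick S a) \<bullet> row X (pick S b)"
      using a' b' Xs X pN by (auto simp: scalar_prod_def rows_sel_idx[OF X S] intro!: sum.cong)
    also have "(if a = b then lam else 0) = (if pick S a = pick S b then lam else 0)"
      using a' b' by (metis idx_pick)
    also have "row X (pick S a) \<bullet> row X (pick S b) + (if pick S a = pick S b then lam else 0) = ?P $$ (pick S a, pick S b)"
      unfolding Pxx_def using X pN a' b' by simp
    also have "\<dots> = sub_sq ?P S $$ (a,b)" using sub_sq_idx[OF P S a' b'] by simp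
    finally show "(?Xs * ?Xs\<^sup>T + lam \<cdot>\<^sub>m 1\<^sub>m (card S)) $$ (a,b) = sub_sq ?P S $$ (a,b)" .
  qed (use A Xs in auto)
  have YX: "Y * ?Xs\<^sup>T = ?C\<^sup>T" using transpose_mult[OF Xs, of "Y\<^sup>T" Ny] Y by simp
  have prod: "Y * ?Xs\<^sup>T * ?Ai * ?Xs * Y\<^sup>T = ?C\<^sup>T * ?Ai * ?C"
    unfolding YX by (rule assoc_mult_mat[of _ Ny "card S" _ M _ Ny]) (use C Ai Xs Y in auto)
  have Cidx: "?C $$ (a,j) = ?B $$ (pick S a, j)" if "a < card S" "j < Ny" for a j
    using that Xs X Y pN unfolding Pxy_def by (auto simp: scalar_prod_def rows_sel_idx[OF X S] intro!: sum.cong)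
  have dr: "dim_row (?C\<^sup>T * ?Ai * ?C) = Ny" using C Y by simp
  have "Jfun X Y lam S = mtrace (?C\<^sup>T * ?Ai * ?C)"
    unfolding Jfun_def using False eqA prod card_sub[OF S] by simp
  also have "\<dots> = (\<Sum>j<Ny. (?C\<^sup>T * ?Ai * ?C) $$ (j,j))" by (simp only: mtrace_def dr)
  also have "\<dots> = (\<Sum>j<Ny. \<Sum>a<card S. \<Sum>b<card S. ?C $$ (a,j) * ?Ai $$ (a,b) * ?C $$ (b,j))"
    by (intro sum.cong refl trip[OF C Ai C]) auto
  also have "\<dots> = (\<Sum>j<Ny. \<Sum>a<card S. \<Sum>b<card S. ?B $$ (pick S a,j) * ?Ai $$ (a,b) * ?B $$ (pick S b,j))"
    by (intro sum.cong refl) (simp add: Cidx)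
  also have "\<dots> = (\<Sum>j<Ny. \<Sum>r<N. \<Sum>c<N. ?B $$ (r,j) * Gm ?Ai S r c * ?B $$ (c,j))"
    by (intro sum.cong refl conv[OF fin S])
  finally show ?thesis .
qed


definition PDf :: "(nat \<Rightarrow> nat \<Rightarrow> real) \<Rightarrow> nat \<Rightarrow> nat set \<Rightarrow> bool" where
  "PDf p N T \<longleftrightarrow> (\<forall>v. (\<forall>k<N. k \<notin> T \<longrightarrow> v k = 0) \<longrightarrow> (\<exists>k<N. v k \<noteq> 0) \<longrightarrow>
      (\<Sum>r<N. v r * (\<Sum>c<N. p r c * v c)) > 0)"

lemma PDon_PDf: assumes P: "P \<in> carrier_mat N N" and pd: "PDon P N T"
  shows "PDf (\<lambda>r c. P $$ (r,c)) N T"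
  unfolding PDf_def
proof (intro allI impI)
  fix v :: "nat \<Rightarrow> real" assume supp: "\<forall>k<N. k \<notin> T \<longrightarrow> v k = 0" and ex: "\<exists>k<N. v k \<noteq> 0"
  let ?v = "vec N v"
  have vc: "?v \<in> carrier_vec N" by simp
  obtain k where k: "k < N" "v k \<noteq> 0" using ex by blast
  have "?v \<noteq> 0\<^sub>v N"
  proof
    assume "?v = 0\<^sub>v N"
    then have "?v $ k = 0" using k by simp
    then show False using k by simp
  qed
  then have "?v \<bullet> (P *\<^sub>v ?v) > 0" using pd vc supp unfolding PDon_def by auto
  then show "(\<Sum>r<N. v r * (\<Sum>c<N. P $$ (r,c) * v c)) > 0"
    using quad_expand[OF P vc] by simp
qed

lemma uniq_f: assumes pd: "PDf p N T"
  and G0: "\<And>r c. r < N \<Longrightarrow> c < N \<Longrightarrow> \<not> (r \<in> T \<and> c \<in> T) \<Longrightarrow> G r c = 0"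
  and H0: "\<And>r c. r < N \<Longrightarrow> c < N \<Longrightarrow> \<not> (r \<in> T \<and> c \<in> T) \<Longrightarrow> H r c = 0"
  and G2: "\<And>r c. r \<in> T \<Longrightarrow> c \<in> T \<Longrightarrow> (\<Sum>k<N. p r k * G k c) = (if r = c then 1 else (0::real))"
  and H2: "\<And>r c. r \<in> T \<Longrightarrow> c \<in> T \<Longrightarrow> (\<Sum>k<N. p r k * H k c) = (if r = c then 1 else (0::real))"
  and r: "r < N" and c: "c < N"
  shows "G r c = H r c"
proof (cases "c \<in> T")
  case False then show ?thesis using G0 H0 r c by auto
next
  case cT: True
  define v where "v = (\<lambda>k. G k c - H k c)"
  have supp: "\<forall>k<N. k \<notin> T \<longrightarrow> v k = 0" unfolding v_def using G0 H0 c by auto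
  have "(\<Sum>k<N. v k * (\<Sum>l<N. p k l * v l)) = 0"
  proof (rule sum.neutral, intro ballI)
    fix k assume k: "k \<in> {..<N}"
    show "v k * (\<Sum>l<N. p k l * v l) = 0"
    proof (cases "k \<in> T")
      case True
      have "(\<Sum>l<N. p k l * v l) = (\<Sum>l<N. p k l * G l c) - (\<Sum>l<N. p k l * H l c)"
        unfolding v_def by (simp add: algebra_simps sum_subtractf)
      also have "\<dots> = 0" using G2[OF True cT] H2[OF True cT] by simp
      finally show ?thesis by simp
    next
      case False then show ?thesis using supp k by simp
    qed
  qed
  moreover have "(\<exists>k<N. v k \<noteq> 0) \<Longrightarrow> (\<Sum>k<N. v k * (\<Sum>l<N. p k l * v l)) > 0"
    using pd supp unfolding PDf_def by blast
  ultimately have "\<not> (\<exists>k<N. v k \<noteq> 0)" by auto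
  then have "v r = 0" using r by simp
  then show ?thesis unfolding v_def by simp
qed

lemma PDf_mono: "PDf p N T \<Longrightarrow> S \<subseteq> T \<Longrightarrow> PDf p N S"
  unfolding PDf_def by blast


lemma sum_ind: "i < (N::nat) \<Longrightarrow> (\<Sum>k<N. f k * (if k = i then 1 else 0)) = (f i :: real)"
proof -
  assume i: "i < N"
  have "(\<Sum>k<N. f k * (if k = i then 1 else 0)) = (\<Sum>k<N. if k = i then f k else 0)"
    by (rule sum.cong) auto
  also have "\<dots> = (if i \<in> {..<N} then f i else 0)" by simp
  finally show ?thesis using i by simp
qed



lemma core:
  fixes p G H b :: "nat \<Rightarrow> nat \<Rightarrow> real"
  assumes psym: "\<And>r c. r < N \<Longrightarrow> c < N \<Longrightarrow> p r c = p c r"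
  and S: "S \<subseteq> {0..<N}" and i: "i < N" and iS: "i \<notin> S"
  and pd: "PDf p N (insert i S)"
  and G0: "\<And>r c. r < N \<Longrightarrow> c < N \<Longrightarrow> \<not> (r \<in> S \<and> c \<in> S) \<Longrightarrow> G r c = 0"
  and G2: "\<And>r c. r \<in> S \<Longrightarrow> c \<in> S \<Longrightarrow> (\<Sum>k<N. p r k * G k c) = (if r = c then 1 else 0)"
  and G3: "\<And>r c. r \<in> S \<Longrightarrow> c \<in> S \<Longrightarrow> (\<Sum>k<N. G r k * p k c) = (if r = c then 1 else 0)"
  and H0: "\<And>r c. r < N \<Longrightarrow> c < N \<Longrightarrow> \<not> (r \<in> insert i S \<and> c \<in> insert i S) \<Longrightarrow> H r c = 0"
  and H2: "\<And>r c. r \<in> insert i S \<Longrightarrow> c \<in> insert i S \<Longrightarrow> (\<Sum>k<N. p r k * H k c) = (if r = c then 1 else 0)"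
  shows "(\<Sum>j<Ny. \<Sum>r<N. \<Sum>c<N. b r j * H r c * b c j) - (\<Sum>j<Ny. \<Sum>r<N. \<Sum>c<N. b r j * G r c * b c j)
    = (\<Sum>j<Ny. (b i j - (\<Sum>r<N. \<Sum>c<N. p r i * G r c * b c j))\<^sup>2) / (p i i - (\<Sum>r<N. \<Sum>c<N. p r i * G r c * p c i))"
proof -
  let ?T = "insert i S"
  have SN: "r \<in> S \<Longrightarrow> r < N" for r using S by auto
  have Gsym: "G r c = G c r" if r: "r < N" and c: "c < N" for r c
  proof (rule uniq_f[OF PDf_mono[OF pd] G0, where H="\<lambda>r c. G c r"])
    show "S \<subseteq> ?T" by auto
  next
    fix r c assume "r \<in> S" "c \<in> S"
    then have "(\<Sum>k<N. p r k * G c k) = (\<Sum>k<N. G c k * p k r)"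
      using psym SN by (intro sum.cong refl) (auto simp: mult.commute)
    also have "\<dots> = (if r = c then 1 else 0)" using G3[OF \<open>c \<in> S\<close> \<open>r \<in> S\<close>] by auto
    finally show "(\<Sum>k<N. p r k * G c k) = (if r = c then 1 else 0)" .
  qed (use G0 G2 r c in auto)
  define s where "s = p i i - (\<Sum>r<N. \<Sum>c<N. p r i * G r c * p c i)"
  define u where "u = (\<lambda>k. (if k = i then 1 else 0) - (\<Sum>l<N. G k l * p l i))"
  have uout: "u k = 0" if "k < N" "k \<notin> ?T" for k
    unfolding u_def using that G0 by (auto intro!: sum.neutral)
  have ui: "u i = 1"
    unfolding u_def using iS G0 i by (auto intro!: sum.neutral)
  have PG: "(\<Sum>k<N. p r k * G k l) = (if l = r then 1 else 0)" if r: "r \<in> S" and l: "l < N" for r l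
  proof (cases "l \<in> S")
    case True then show ?thesis using G2[OF r True] by auto
  next
    case False then show ?thesis using G0 l r by (auto intro!: sum.neutral)
  qed
  have e1: "(\<Sum>k<N. p r k * u k) = p r i - (\<Sum>k<N. \<Sum>l<N. p r k * G k l * p l i)" for r
  proof -
    have "(\<Sum>k<N. p r k * u k) = (\<Sum>k<N. p r k * (if k = i then 1 else 0)) - (\<Sum>k<N. p r k * (\<Sum>l<N. G k l * p l i))"
      unfolding u_def by (simp add: right_diff_distrib sum_subtractf)
    also have "\<dots> = p r i - (\<Sum>k<N. \<Sum>l<N. p r k * G k l * p l i)"
      using i by (simp add: sum_ind sum_distrib_left mult.assoc)
    finally show ?thesis .
  qed
  have wS: "(\<Sum>k<N. p r k * u k) = 0" if r: "r \<in> S" for r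
  proof -
    have "(\<Sum>k<N. \<Sum>l<N. p r k * G k l * p l i) = (\<Sum>l<N. (\<Sum>k<N. p r k * G k l) * p l i)"
      by (subst sum.swap) (simp add: sum_distrib_right)
    also have "\<dots> = (\<Sum>l<N. (if l = r then 1 else 0) * p l i)"
      by (intro sum.cong refl) (simp add: PG r)
    also have "\<dots> = (\<Sum>l<N. if l = r then p l i else 0)" by (intro sum.cong refl) auto
    also have "\<dots> = p r i" using SN[OF r] by simp
    finally show ?thesis using e1 by simp
  qed
  have wi: "(\<Sum>k<N. p i k * u k) = s"
    unfolding e1 s_def using psym i by (intro arg_cong2[where f="(-)"] refl sum.cong) auto
  have quad: "(\<Sum>r<N. u r * (\<Sum>c<N. p r c * u c)) = s"
  proof -
    have "(\<Sum>r<N. u r * (\<Sum>c<N. p r c * u c)) = (\<Sum>r<N. if r = i then s else 0)"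
    proof (rule sum.cong[OF refl])
      fix r assume r: "r \<in> {..<N}"
      show "u r * (\<Sum>c<N. p r c * u c) = (if r = i then s else 0)"
        using wS uout r wi ui by (cases "r = i"; cases "r \<in> S") auto
    qed
    also have "\<dots> = s" using i by (simp add: sum.delta')
    finally show ?thesis .
  qed
  have spos: "s > 0"
  proof -
    have "(\<forall>k<N. k \<notin> ?T \<longrightarrow> u k = 0)" using uout by blast
    moreover have "\<exists>k<N. u k \<noteq> 0" using ui i by auto
    ultimately have "(\<Sum>r<N. u r * (\<Sum>c<N. p r c * u c)) > 0"
      using pd[unfolded PDf_def, rule_format, of u] by blast
    then show ?thesis using quad by simp
  qed
  define H' where "H' = (\<lambda>r c. G r c + u r * u c / s)"
  have HH: "H r c = H' r c" if r: "r < N" and c: "c < N" for r c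
  proof (rule uniq_f[OF pd H0, where H=H'])
    fix r c assume rc: "r < N" "c < N" "\<not> (r \<in> ?T \<and> c \<in> ?T)"
    then show "H' r c = 0" unfolding H'_def using G0 uout by auto
  next
    fix r c assume rT: "r \<in> ?T" and cT: "c \<in> ?T"
    have split: "(\<Sum>k<N. p r k * H' k c) = (\<Sum>k<N. p r k * G k c) + (\<Sum>k<N. p r k * u k) * u c / s"
      unfolding H'_def by (simp add: distrib_left sum.distrib sum_distrib_right sum_divide_distrib mult.assoc)
    show "(\<Sum>k<N. p r k * H' k c) = (if r = c then 1 else 0)"
    proof (cases "r \<in> S")
      case True
      have cN: "c < N" using cT i SN by auto
      show ?thesis unfolding split using wS[OF True] PG[OF True cN] by auto
    next
      case False
      then have ri: "r = i" using rT by auto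
      show ?thesis
      proof (cases "c = i")
        case True
        have "(\<Sum>k<N. p r k * G k c) = 0" using G0 True iS i by (auto intro!: sum.neutral)
        then show ?thesis unfolding split using ri True wi ui spos by simp
      next
        case False
        then have cS: "c \<in> S" using cT by auto
        have "u c = - (\<Sum>l<N. G c l * p l i)" unfolding u_def using False by simp
        also have "(\<Sum>l<N. G c l * p l i) = (\<Sum>k<N. p r k * G k c)"
          using ri Gsym psym SN[OF cS] i by (intro sum.cong refl) (auto simp: mult.commute)
        finally have "u c = - (\<Sum>k<N. p r k * G k c)" .
        then show ?thesis unfolding split using ri False wi spos by simp
      qed
    qed
  qed (use H2 r c in auto)
  have bu: "(\<Sum>r<N. b r j * u r) = b i j - (\<Sum>r<N. \<Sum>c<N. p r i * G r c * b c j)" for j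
  proof -
    have "(\<Sum>r<N. b r j * u r) = (\<Sum>r<N. b r j * (if r = i then 1 else 0)) - (\<Sum>r<N. b r j * (\<Sum>l<N. G r l * p l i))"
      unfolding u_def by (simp add: right_diff_distrib sum_subtractf)
    also have "(\<Sum>r<N. b r j * (\<Sum>l<N. G r l * p l i)) = (\<Sum>r<N. \<Sum>l<N. b r j * G r l * p l i)"
      by (simp add: sum_distrib_left mult.assoc)
    also have "\<dots> = (\<Sum>l<N. \<Sum>r<N. b r j * G r l * p l i)" by (rule sum.swap)
    also have "\<dots> = (\<Sum>l<N. \<Sum>r<N. p l i * G l r * b r j)"
      using Gsym by (intro sum.cong refl) (auto simp: mult.commute mult.left_commute)
    finally show ?thesis using i by (simp add: sum_ind)
  qed
  have "(\<Sum>j<Ny. \<Sum>r<N. \<Sum>c<N. b r j * H r c * b c j) - (\<Sum>j<Ny. \<Sum>r<N. \<Sum>c<N. b r j * G r c * b c j)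
      = (\<Sum>j<Ny. \<Sum>r<N. \<Sum>c<N. b r j * (H r c - G r c) * b c j)"
    by (simp add: sum_subtractf[symmetric] algebra_simps)
  also have "\<dots> = (\<Sum>j<Ny. \<Sum>r<N. \<Sum>c<N. (b r j * u r) * (b c j * u c) / s)"
    using HH by (intro sum.cong refl) (simp add: H'_def)
  also have "\<dots> = (\<Sum>j<Ny. (\<Sum>r<N. b r j * u r) * (\<Sum>c<N. b c j * u c) / s)"
    by (simp add: sum_divide_distrib[symmetric] sum_product)
  also have "\<dots> = (\<Sum>j<Ny. (b i j - (\<Sum>r<N. \<Sum>c<N. p r i * G r c * b c j))\<^sup>2 / s)"
    by (simp add: bu power2_eq_square)
  also have "\<dots> = (\<Sum>j<Ny. (b i j - (\<Sum>r<N. \<Sum>c<N. p r i * G r c * b c j))\<^sup>2) / s"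
    by (simp add: sum_divide_distrib)
  finally show ?thesis unfolding s_def .
qed


lemma Qxy_carrier: assumes X: "X \<in> carrier_mat N M" and Y: "Y \<in> carrier_mat Ny M" and S: "S \<subseteq> {0..<N}"
  shows "Qxy X Y lam S \<in> carrier_mat N Ny"
proof (cases "S = {}")
  case True then show ?thesis unfolding Qxy_def using Pxy_carrier[OF X Y] by simp
next
  case False
  have P: "Pxx X lam \<in> carrier_mat N N" by (rule Pxx_carrier[OF X])
  have B: "Pxy X Y \<in> carrier_mat N Ny" by (rule Pxy_carrier[OF X Y])
  have RB: "rows_sel (Pxy X Y) S \<in> carrier_mat (card S) Ny" by (rule rows_sel_dims[OF B S])
  have R: "rows_sel (Pxx X lam) S \<in> carrier_mat (card S) N" by (rule rows_sel_dims[OF P S])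
  show ?thesis unfolding Qxy_def using False RB R by auto
qed

lemma vnorm_sq: "(vnorm v)\<^sup>2 = (\<Sum>j<dim_vec v. (v $ j)\<^sup>2)"
proof -
  have "v \<bullet> v = (\<Sum>j<dim_vec v. (v $ j)\<^sup>2)"
    unfolding scalar_prod_def by (simp add: lessThan_atLeast0 power2_eq_square)
  moreover have "(\<Sum>j<dim_vec v. (v $ j)\<^sup>2) \<ge> 0" by (simp add: sum_nonneg)
  ultimately show ?thesis unfolding vnorm_def by simp
qed

theorem theorem1:
  fixes N Ny M :: nat and X Y :: "real mat" and lam :: real and S :: "nat set" and i :: nat
  assumes "X \<in> carrier_mat N M"
    and "Y \<in> carrier_mat Ny M"
    and "lam \<ge> 0"
    and "S \<subseteq> {0..<N}"
    and "i \<in> {0..<N} - S"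
    and "pos_def (sub_sq (Pxx X lam) (insert i S))"
  shows "Jfun X Y lam (insert i S) - Jfun X Y lam S
           = (vnorm (row (Qxy X Y lam S) i))\<^sup>2 / (Qxx X lam S $$ (i,i))"
proof -
  note X = assms(1) and Y = assms(2) and S = assms(4)
  let ?P = "Pxx X lam"
  let ?B = "Pxy X Y"
  let ?T = "insert i S"
  have P: "?P \<in> carrier_mat N N" by (rule Pxx_carrier[OF X])
  have B: "?B \<in> carrier_mat N Ny" by (rule Pxy_carrier[OF X Y])
  have iN: "i < N" and iS: "i \<notin> S" using assms(5) by auto
  have T: "?T \<subseteq> {0..<N}" using S iN by auto
  have pdT: "PDon ?P N ?T" by (rule pos_def_PDon[OF P T assms(6)])
  have pdS: "PDon ?P N S" by (rule PDon_mono[OF pdT]) auto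
  have AS: "sub_sq ?P S \<in> carrier_mat (card S) (card S)" by (rule sub_sq_dims[OF P S])
  have AT: "sub_sq ?P ?T \<in> carrier_mat (card ?T) (card ?T)" by (rule sub_sq_dims[OF P T])
  note invS = minv_props[OF AS PDon_det[OF P S pdS]]
  note invT = minv_props[OF AT PDon_det[OF P T pdT]]
  let ?G = "Gm (minv (sub_sq ?P S)) S"
  let ?H = "Gm (minv (sub_sq ?P ?T)) ?T"
  have core_inst: "(\<Sum>j<Ny. \<Sum>r<N. \<Sum>c<N. ?B $$ (r,j) * ?H r c * ?B $$ (c,j))
      - (\<Sum>j<Ny. \<Sum>r<N. \<Sum>c<N. ?B $$ (r,j) * ?G r c * ?B $$ (c,j))
    = (\<Sum>j<Ny. (?B $$ (i,j) - (\<Sum>r<N. \<Sum>c<N. ?P $$ (r,i) * ?G r c * ?B $$ (c,j)))\<^sup>2)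
      / (?P $$ (i,i) - (\<Sum>r<N. \<Sum>c<N. ?P $$ (r,i) * ?G r c * ?P $$ (c,i)))"
  proof (rule core[where p="\<lambda>r c. ?P $$ (r,c)" and b="\<lambda>r j. ?B $$ (r,j)"])
    show "\<And>r c. r < N \<Longrightarrow> c < N \<Longrightarrow> ?P $$ (r,c) = ?P $$ (c,r)" by (rule Pxx_sym[OF X])
    show "PDf (\<lambda>r c. ?P $$ (r,c)) N ?T" by (rule PDon_PDf[OF P pdT])
    show "\<And>r c. r \<in> S \<Longrightarrow> c \<in> S \<Longrightarrow> (\<Sum>k<N. ?P $$ (r,k) * ?G k c) = (if r = c then 1 else 0)"
      by (rule G2[OF P S invS(1,2)])
    show "\<And>r c. r \<in> S \<Longrightarrow> c \<in> S \<Longrightarrow> (\<Sum>k<N. ?G r k * ?P $$ (k,c)) = (if r = c then 1 else 0)"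
      by (rule G3[OF P S invS(1,3)])
    show "\<And>r c. r \<in> ?T \<Longrightarrow> c \<in> ?T \<Longrightarrow> (\<Sum>k<N. ?P $$ (r,k) * ?H k c) = (if r = c then 1 else 0)"
      by (rule G2[OF P T invT(1,2)])
  qed (use S iN iS in \<open>auto simp: Gm_def\<close>)
  have Q: "Qxy X Y lam S \<in> carrier_mat N Ny" by (rule Qxy_carrier[OF X Y S])
  have "(vnorm (row (Qxy X Y lam S) i))\<^sup>2 = (\<Sum>j<Ny. (Qxy X Y lam S $$ (i,j))\<^sup>2)"
    unfolding vnorm_sq using Q iN by (auto intro!: sum.cong)
  also have "\<dots> = (\<Sum>j<Ny. (?B $$ (i,j) - (\<Sum>r<N. \<Sum>c<N. ?P $$ (r,i) * ?G r c * ?B $$ (c,j)))\<^sup>2)"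
    by (intro sum.cong refl) (simp add: Qxy_entry[OF X Y S pdS iN])
  finally have num: "(vnorm (row (Qxy X Y lam S) i))\<^sup>2 = \<dots>" .
  show ?thesis
    unfolding num Qxx_entry[OF X S pdS iN] J_entry[OF X Y S pdS] J_entry[OF X Y T pdT]
    by (rule core_inst)
qed

end
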